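(* Let $T(x)=\int_{\mathbb R}e^{-\sqrt2|x-y|}\mathrm{sech}^2(y)\,dy$, and for integers $k\ge1$ let $p_k=\int_{\mathbb R}\mathrm{sech}^k(x)\cos(x)\,dx$, $r_k=\int_{\mathbb R}\mathrm{sech}^k(x)T(x)\cos(x)\,dx$, $s_k=\int_{\mathbb R}\mathrm{sech}^k(x)T(x)\tanh(x)\sin(x)\,dx$. Then \begin{align*} r_3&=-r_1+s_1+\sqrt2\,p_1,\\ s_3&=\tfrac13s_1-r_1+\tfrac79\sqrt2\,p_1,\\ r_5&=-r_1+\tfrac23s_1+\tfrac{37}{36}\sqrt2\,p_1,\\ s_5&=-\tfrac25r_1+\tfrac1{15}s_1+\tfrac{13}{36}\sqrt2\,p_1,\\ r_7&=-\tfrac{13}{15}r_1+\tfrac{23}{45}s_1+\tfrac{83\sqrt2}{90}p_1 . \end{align*} *)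

theory Defs
  imports "HOL-Analysis.Analysis"
begin

definition sech :: "real \<Rightarrow> real" where
  "sech x = 1 / cosh x"

definition Tfun :: "real \<Rightarrow> real" where
  "Tfun x = (\<integral>y. exp (- sqrt 2 * \<bar>x - y\<bar>) * (sech y)^2 \<partial>lborel)"

definition p_int :: "nat \<Rightarrow> real" where
  "p_int k = (\<integral>x. (sech x)^k * cos x \<partial>lborel)"

definition r_int :: "nat \<Rightarrow> real" where
  "r_int k = (\<integral>x. (sech x)^k * Tfun x * cos x \<partial>lborel)"

definition s_int :: "nat \<Rightarrow> real" where
  "s_int k = (\<integral>x. (sech x)^k * Tfun x * tanh x * sin x \<partial>lborel)"

end

theory Submission imports Defs "HOL-Real_Asymp.Real_Asymp" begin


lemma sech_pos: "0 < sech x" unfolding sech_def by (simp add: cosh_real_pos)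
lemma sech_le1: "sech x \<le> 1" unfolding sech_def
  by (metis cosh_real_ge_1 divide_le_eq_1 less_le_trans zero_less_one)
lemma tanh_sq: "tanh x ^ 2 = 1 - sech x ^ 2"
proof -
  have c: "cosh x \<noteq> 0" using cosh_real_pos[of x] by simp
  have h: "sinh x ^2 = cosh x ^2 - 1" using hyperbolic_pythagoras[of x] by simp
  show ?thesis unfolding sech_def tanh_def using c
    by (simp add: power_divide h diff_divide_distrib)
qed

lemma sech_deriv: "(sech has_real_derivative (- sech x * tanh x)) (at x)"
  unfolding sech_def tanh_def using cosh_real_pos[of x]
  by (auto intro!: derivative_eq_intros simp: field_simps power2_eq_square)

lemma tanh_deriv: "(tanh has_real_derivative (sech x ^ 2)) (at (x::real))"
  using cosh_real_pos[of x] hyperbolic_pythagoras[of x] unfolding sech_def tanh_def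
  by (auto intro!: derivative_eq_intros simp: field_simps power2_eq_square)

lemma sechk_deriv: "((\<lambda>x. sech x ^ k) has_real_derivative (- real k * sech x ^ k * tanh x)) (at x)"
proof -
  have "((\<lambda>x. sech x ^ k) has_real_derivative (real k * ((- sech x * tanh x) * sech x ^ (k - Suc 0)))) (at x)"
    by (rule DERIV_power[OF sech_deriv])
  moreover have e: "real k * ((- sech x * tanh x) * sech x ^ (k - Suc 0)) = - real k * sech x ^ k * tanh x"
    by (cases k) (auto simp: algebra_simps)
  ultimately show ?thesis by metis
qed

lemma sech_cont: "isCont sech x" using sech_deriv DERIV_isCont by blast
lemma tanh_cont: "isCont tanh (x::real)" using tanh_deriv DERIV_isCont by blast

lemma sech_meas[measurable]: "sech \<in> borel_measurable borel"
  by (intro borel_measurable_continuous_onI continuous_at_imp_continuous_on ballI sech_cont)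

lemma gd_deriv: "((\<lambda>x. arctan (sinh x)) has_real_derivative sech x) (at x)"
proof -
  have "((\<lambda>x. arctan (sinh x)) has_real_derivative (1 / (1 + (sinh x)\<^sup>2)) * cosh x) (at x)"
    using sum_power2_gt_zero_iff[of 1 "sinh x"]
    by (auto intro!: derivative_eq_intros simp: divide_inverse)
  moreover have "(1 / (1 + (sinh x)\<^sup>2)) * cosh x = sech x"
  proof -
    have "1 + (sinh x)\<^sup>2 = (cosh x)\<^sup>2" using cosh_square_eq[of x] by simp
    then show ?thesis using cosh_real_pos[of x] unfolding sech_def by (simp add: power2_eq_square)
  qed
  ultimately show ?thesis by metis
qed

lemma integrable_sech: "integrable lborel sech"
proof -
  have "set_integrable lborel (einterval (-\<infinity>) \<infinity>) sech"
  proof (rule interval_integral_FTC_nonneg(1)[where F="\<lambda>x. arctan (sinh x)" and A="-(pi/2)" and B="pi/2"])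
    show "(((\<lambda>x. arctan (sinh x)) \<circ> real_of_ereal) \<longlongrightarrow> - (pi / 2)) (at_right (- \<infinity>))"
      unfolding ereal_tendsto_simps
      by (rule filterlim_compose[OF tendsto_arctan_at_bot sinh_real_at_bot])
    show "(((\<lambda>x. arctan (sinh x)) \<circ> real_of_ereal) \<longlongrightarrow> (pi / 2)) (at_left \<infinity>)"
      unfolding ereal_tendsto_simps
      by (rule filterlim_compose[OF tendsto_arctan_at_top sinh_real_at_top])
  qed (auto intro: gd_deriv sech_cont less_imp_le[OF sech_pos])
  then show ?thesis by (simp add: set_integrable_def)
qed

lemma integrable_sech_bound:
  fixes f :: "real \<Rightarrow> real"
  assumes [measurable]: "f \<in> borel_measurable borel" and b: "\<And>x. \<bar>f x\<bar> \<le> C * sech x"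
  shows "integrable lborel f"
proof (rule Bochner_Integration.integrable_bound[where f="\<lambda>x. C * sech x"])
  show "integrable lborel (\<lambda>x. C * sech x)" using integrable_sech by simp
  show "AE x in lborel. norm (f x) \<le> norm (C * sech x)"
    using b by (auto intro: order_trans[OF _ abs_ge_self])
qed simp

lemma Tfun_meas[measurable]: "Tfun \<in> borel_measurable borel"
proof -
  have "(\<lambda>x. \<integral>y. exp (- sqrt 2 * \<bar>x - y\<bar>) * (sech y)^2 \<partial>lborel) \<in> borel_measurable lborel"
    by (rule lborel.borel_measurable_lebesgue_integral) simp
  then show ?thesis unfolding Tfun_def[abs_def] by simp
qed

lemma integrable_sech2: "integrable lborel (\<lambda>y. sech y ^ 2)"
  by (rule integrable_sech_bound[where C=1]) (use sech_le1 sech_pos in \<open>auto simp: power2_eq_square intro: mult_left_le_one_le less_imp_le\<close>)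

lemma Tfun_integrable: "integrable lborel (\<lambda>y. exp (- sqrt 2 * \<bar>x - y\<bar>) * (sech y)^2)"
proof (rule integrable_sech_bound[where C=1])
  fix y
  have "exp (- sqrt 2 * \<bar>x - y\<bar>) \<le> 1" by simp
  moreover have "sech y ^ 2 \<le> sech y" using sech_le1[of y] sech_pos[of y]
    by (simp add: power2_eq_square mult_left_le_one_le)
  ultimately show "\<bar>exp (- sqrt 2 * \<bar>x - y\<bar>) * (sech y)^2\<bar> \<le> 1 * sech y"
  proof -
    have "exp (- sqrt 2 * \<bar>x - y\<bar>) * (sech y)^2 \<le> (sech y)^2"
      by (rule mult_left_le_one_le) (use \<open>exp (- sqrt 2 * \<bar>x - y\<bar>) \<le> 1\<close> in auto)
    then show ?thesis using \<open>sech y ^ 2 \<le> sech y\<close> by (simp add: abs_mult)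
  qed
qed simp

definition TB where "TB = (\<integral>y. (sech y)^2 \<partial>lborel)"

lemma Tfun_bound: "\<bar>Tfun x\<bar> \<le> TB"
proof -
  have "\<bar>Tfun x\<bar> \<le> (\<integral>y. \<bar>exp (- sqrt 2 * \<bar>x - y\<bar>) * (sech y)^2\<bar> \<partial>lborel)"
    unfolding Tfun_def by (rule integral_abs_bound)
  also have "\<dots> \<le> TB" unfolding TB_def
    by (rule integral_mono) (use Tfun_integrable integrable_sech2 in \<open>auto simp: abs_mult intro!: mult_left_le_one_le\<close>)
  finally show ?thesis .
qed

lemma integrable_T_bound:
  fixes f :: "real \<Rightarrow> real"
  assumes [measurable]: "f \<in> borel_measurable borel" and b: "\<And>x. \<bar>f x\<bar> \<le> C * sech x"
  shows "integrable lborel (\<lambda>x. f x * Tfun x)"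
proof (rule Bochner_Integration.integrable_bound[where f="\<lambda>x. C * TB * sech x"])
  show "integrable lborel (\<lambda>x. C * TB * sech x)" using integrable_sech by simp
  have "\<bar>f x * Tfun x\<bar> \<le> C * TB * sech x" for x
  proof -
    have "\<bar>f x * Tfun x\<bar> = \<bar>f x\<bar> * \<bar>Tfun x\<bar>" by (simp add: abs_mult)
    also have "\<dots> \<le> (C * sech x) * TB" by (rule mult_mono[OF b Tfun_bound]) (auto intro: order_trans[OF abs_ge_zero b])
    finally show ?thesis by (simp add: mult_ac)
  qed
  then show "AE x in lborel. norm (f x * Tfun x) \<le> norm (C * TB * sech x)"
    by (auto intro: order_trans[OF _ abs_ge_self])
qed simp

lemma KL:
  fixes f0 f1 f2 :: "real \<Rightarrow> real"
  assumes d0: "\<And>x. (f0 has_real_derivative f1 x) (at x)"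
    and d1: "\<And>x. (f1 has_real_derivative f2 x) (at x)"
    and c2: "\<And>x. isCont f2 x"
    and l0t: "(f0 \<longlongrightarrow> 0) at_top" and l0b: "(f0 \<longlongrightarrow> 0) at_bot"
    and l1t: "(f1 \<longlongrightarrow> 0) at_top" and l1b: "(f1 \<longlongrightarrow> 0) at_bot"
    and int: "integrable lborel (\<lambda>x. f2 x - 2 * f0 x)"
  shows "(\<integral>x. exp (- sqrt 2 * \<bar>x - y\<bar>) * (f2 x - 2 * f0 x) \<partial>lborel) = - 2 * sqrt 2 * f0 y"
proof -
  define g where "g x = exp (- sqrt 2 * \<bar>x - y\<bar>) * (f2 x - 2 * f0 x)" for x
  have c0: "isCont f0 x" for x using d0 DERIV_isCont by blast
  have c1: "isCont f1 x" for x using d1 DERIV_isCont by blast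
  have cg: "isCont g x" for x unfolding g_def by (intro continuous_intros c0 c2)
  have mpsi[measurable]: "(\<lambda>x. f2 x - 2 * f0 x) \<in> borel_measurable borel"
    using int by (simp add: borel_measurable_integrable)
  have gmeas[measurable]: "g \<in> borel_measurable borel" unfolding g_def by measurable
  have gint: "integrable lborel g"
  proof (rule Bochner_Integration.integrable_bound[OF int])
    show "AE x in lborel. norm (g x) \<le> norm (f2 x - 2 * f0 x)"
      by (auto simp: g_def abs_mult intro!: mult_left_le_one_le)
  qed simp
  have sint: "set_integrable lborel A g" if "A \<in> sets borel" for A
    unfolding set_integrable_def using that by (intro integrable_mult_indicator gint) auto
  define H where "H x = exp (- sqrt 2 * (x - y)) * (f1 x + sqrt 2 * f0 x)" for x
  define H2 where "H2 x = exp (sqrt 2 * (x - y)) * (f1 x - sqrt 2 * f0 x)" for x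
  have dH: "(H has_real_derivative exp (- sqrt 2 * (x - y)) * (f2 x - 2 * f0 x)) (at x)" for x
    unfolding H_def[abs_def] by (auto intro!: derivative_eq_intros d0 d1 simp: algebra_simps)
  have dH2: "(H2 has_real_derivative exp (sqrt 2 * (x - y)) * (f2 x - 2 * f0 x)) (at x)" for x
    unfolding H2_def[abs_def] by (auto intro!: derivative_eq_intros d0 d1 simp: algebra_simps)
  have cH: "isCont H x" for x using dH DERIV_isCont by blast
  have cH2: "isCont H2 x" for x using dH2 DERIV_isCont by blast
  have right: "(LBINT x=ereal y..\<infinity>. g x) = 0 - H y"
  proof (rule interval_integral_FTC_integrable)
    fix x assume "ereal y < ereal x" "ereal x < \<infinity>"
    then have "x > y" by simp
    then have "g x = exp (- sqrt 2 * (x - y)) * (f2 x - 2 * f0 x)" by (simp add: g_def)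
    then show "(H has_vector_derivative g x) (at x)"
      using dH[of x] by (simp add: has_real_derivative_iff_has_vector_derivative)
  next
    show "set_integrable lborel (einterval (ereal y) \<infinity>) g" by (rule sint) simp
    show "((H \<circ> real_of_ereal) \<longlongrightarrow> H y) (at_right (ereal y))"
      unfolding ereal_tendsto_simps
      by (rule tendsto_mono[OF at_within_le_at]) (use cH[of y] in \<open>simp add: isCont_def\<close>)
    have e: "((\<lambda>x. exp (- sqrt 2 * (x - y))) \<longlongrightarrow> 0) at_top" by real_asymp
    have "((\<lambda>x. exp (- sqrt 2 * (x - y)) * (f1 x + sqrt 2 * f0 x)) \<longlongrightarrow> 0 * (0 + sqrt 2 * 0)) at_top"
      by (intro tendsto_intros e l0t l1t)
    then show "((H \<circ> real_of_ereal) \<longlongrightarrow> 0) (at_left \<infinity>)"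
      unfolding ereal_tendsto_simps H_def[abs_def] by simp
  qed (auto intro: cg)
  have left: "(LBINT x=-\<infinity>..ereal y. g x) = H2 y - 0"
  proof (rule interval_integral_FTC_integrable)
    fix x assume "-\<infinity> < ereal x" "ereal x < ereal y"
    then have "x < y" by simp
    then have "g x = exp (sqrt 2 * (x - y)) * (f2 x - 2 * f0 x)" by (simp add: g_def algebra_simps)
    then show "(H2 has_vector_derivative g x) (at x)"
      using dH2[of x] by (simp add: has_real_derivative_iff_has_vector_derivative)
  next
    show "set_integrable lborel (einterval (-\<infinity>) (ereal y)) g" by (rule sint) simp
    show "((H2 \<circ> real_of_ereal) \<longlongrightarrow> H2 y) (at_left (ereal y))"
      unfolding ereal_tendsto_simps
      by (rule tendsto_mono[OF at_within_le_at]) (use cH2[of y] in \<open>simp add: isCont_def\<close>)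
    have e: "((\<lambda>x. exp (sqrt 2 * (x - y))) \<longlongrightarrow> 0) at_bot" by real_asymp
    have "((\<lambda>x. exp (sqrt 2 * (x - y)) * (f1 x - sqrt 2 * f0 x)) \<longlongrightarrow> 0 * (0 - sqrt 2 * 0)) at_bot"
      by (intro tendsto_intros e l0b l1b)
    then show "((H2 \<circ> real_of_ereal) \<longlongrightarrow> 0) (at_right (-\<infinity>))"
      unfolding ereal_tendsto_simps H2_def[abs_def] by simp
  qed (auto intro: cg)
  have "(LBINT x=-\<infinity>..ereal y. g x) + (LBINT x=ereal y..\<infinity>. g x) = (LBINT x=-\<infinity>..\<infinity>. g x)"
    by (rule interval_integral_sum) (simp add: interval_lebesgue_integrable_def sint)
  also have "(LBINT x=-\<infinity>..\<infinity>. g x) = (\<integral>x. g x \<partial>lborel)"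
    by (simp add: interval_lebesgue_integral_def set_lebesgue_integral_def)
  finally have "(\<integral>x. g x \<partial>lborel) = H2 y - H y" using left right by simp
  then show ?thesis unfolding g_def H_def H2_def by (simp add: algebra_simps)
qed

lemma Fub:
  fixes psi :: "real \<Rightarrow> real"
  assumes [measurable]: "psi \<in> borel_measurable borel" and b: "\<And>x. \<bar>psi x\<bar> \<le> C * sech x"
  shows "(\<integral>x. psi x * Tfun x \<partial>lborel) =
    (\<integral>y. sech y ^ 2 * (\<integral>x. exp (- sqrt 2 * \<bar>x - y\<bar>) * psi x \<partial>lborel) \<partial>lborel)"
proof -
  define f where "f x y = psi x * (exp (- sqrt 2 * \<bar>x - y\<bar>) * sech y ^ 2)" for x y
  have fm[measurable]: "case_prod f \<in> borel_measurable (lborel \<Otimes>\<^sub>M lborel)"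
    unfolding f_def[abs_def] by measurable
  have fi: "integrable (lborel \<Otimes>\<^sub>M lborel) (case_prod f)"
  proof (rule lborel_pair.Fubini_integrable)
    have eq: "(\<integral>y. norm (case_prod f (x, y)) \<partial>lborel) = \<bar>psi x\<bar> * Tfun x" for x
    proof -
      have "(\<integral>y. norm (case_prod f (x, y)) \<partial>lborel) = (\<integral>y. \<bar>psi x\<bar> * (exp (- sqrt 2 * \<bar>x - y\<bar>) * sech y ^ 2) \<partial>lborel)"
        by (rule Bochner_Integration.integral_cong) (auto simp: f_def abs_mult)
      also have "\<dots> = \<bar>psi x\<bar> * Tfun x" unfolding Tfun_def by simp
      finally show ?thesis .
    qed
    show "integrable lborel (\<lambda>x. \<integral>y. norm (case_prod f (x, y)) \<partial>lborel)"
      unfolding eq by (rule integrable_T_bound[where C=C]) (use b in auto)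
    show "AE x in lborel. integrable lborel (\<lambda>y. case_prod f (x, y))"
      unfolding f_def using Tfun_integrable by auto
  qed fact
  have "(\<integral>y. (\<integral>x. f x y \<partial>lborel) \<partial>lborel) = (\<integral>x. (\<integral>y. f x y \<partial>lborel) \<partial>lborel)"
    by (rule lborel_pair.Fubini_integral[OF fi])
  moreover have "(\<integral>x. (\<integral>y. f x y \<partial>lborel) \<partial>lborel) = (\<integral>x. psi x * Tfun x \<partial>lborel)"
    unfolding f_def Tfun_def by simp
  moreover have "(\<integral>y. (\<integral>x. f x y \<partial>lborel) \<partial>lborel) =
     (\<integral>y. sech y ^ 2 * (\<integral>x. exp (- sqrt 2 * \<bar>x - y\<bar>) * psi x \<partial>lborel) \<partial>lborel)"
  proof -
    have "(\<integral>x. f x y \<partial>lborel) = sech y ^ 2 * (\<integral>x. exp (- sqrt 2 * \<bar>x - y\<bar>) * psi x \<partial>lborel)" for y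
    proof -
      have "(\<integral>x. f x y \<partial>lborel) = (\<integral>x. sech y ^ 2 * (exp (- sqrt 2 * \<bar>x - y\<bar>) * psi x) \<partial>lborel)"
        by (rule Bochner_Integration.integral_cong) (auto simp: f_def mult_ac)
      then show ?thesis by simp
    qed
    then show ?thesis by simp
  qed
  ultimately show ?thesis by simp
qed

lemma main_id:
  fixes f0 f1 f2 :: "real \<Rightarrow> real"
  assumes d0: "\<And>x. (f0 has_real_derivative f1 x) (at x)"
    and d1: "\<And>x. (f1 has_real_derivative f2 x) (at x)"
    and c2: "\<And>x. isCont f2 x"
    and l0t: "(f0 \<longlongrightarrow> 0) at_top" and l0b: "(f0 \<longlongrightarrow> 0) at_bot"
    and l1t: "(f1 \<longlongrightarrow> 0) at_top" and l1b: "(f1 \<longlongrightarrow> 0) at_bot"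
    and b: "\<And>x. \<bar>f2 x - 2 * f0 x\<bar> \<le> C * sech x"
  shows "(\<integral>x. (f2 x - 2 * f0 x) * Tfun x \<partial>lborel) = - 2 * sqrt 2 * (\<integral>y. sech y ^ 2 * f0 y \<partial>lborel)"
proof -
  have c0: "isCont f0 x" for x using d0 DERIV_isCont by blast
  have m0[measurable]: "f0 \<in> borel_measurable borel"
    by (intro borel_measurable_continuous_onI continuous_at_imp_continuous_on ballI c0)
  have m2[measurable]: "f2 \<in> borel_measurable borel"
    by (intro borel_measurable_continuous_onI continuous_at_imp_continuous_on ballI c2)
  have int: "integrable lborel (\<lambda>x. f2 x - 2 * f0 x)"
    by (rule integrable_sech_bound[where C=C]) (use b in auto)
  have "(\<integral>x. (f2 x - 2 * f0 x) * Tfun x \<partial>lborel) =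
    (\<integral>y. sech y ^ 2 * (\<integral>x. exp (- sqrt 2 * \<bar>x - y\<bar>) * (f2 x - 2 * f0 x) \<partial>lborel) \<partial>lborel)"
    by (rule Fub[where C=C]) (use b in auto)
  also have "\<dots> = (\<integral>y. sech y ^ 2 * (- 2 * sqrt 2 * f0 y) \<partial>lborel)"
    by (subst KL[OF d0 d1 c2 l0t l0b l1t l1b int]) simp
  also have "\<dots> = (\<integral>y. (- 2 * sqrt 2) * (sech y ^ 2 * f0 y) \<partial>lborel)"
    by (rule Bochner_Integration.integral_cong) (auto simp: mult_ac)
  also have "\<dots> = - 2 * sqrt 2 * (\<integral>y. sech y ^ 2 * f0 y \<partial>lborel)"
    by (rule integral_mult_right_zero)
  finally show ?thesis .
qed

lemma sechk_deriv_eq: "D = - real k * sech x ^ k * tanh x \<Longrightarrow> ((\<lambda>x. sech x ^ k) has_real_derivative D) (at x)"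
  using sechk_deriv by simp
lemma tanh_deriv_eq: "D = sech x ^ 2 \<Longrightarrow> (tanh has_real_derivative D) (at x)"
  using tanh_deriv by simp

lemma tanh_sq': "tanh x * tanh x = 1 - sech x * sech x"
  using tanh_sq[of x] by (simp add: power2_eq_square)

definition sp :: "nat \<Rightarrow> real \<Rightarrow> real" where "sp k x = sech x ^ k"

lemma sp_deriv_eq: "D = - real k * sp k x * tanh x \<Longrightarrow> ((\<lambda>x. sp k x) has_real_derivative D) (at x)"
  using sechk_deriv unfolding sp_def by simp

lemma sp_add2: "sp (k + 2) x = sp k x * (sech x * sech x)"
  unfolding sp_def by (simp add: power_add power2_eq_square)
lemma sp_Suc2: "sp (Suc (Suc k)) x = sp k x * (sech x * sech x)"
  using sp_add2[of k x] by simp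

lemma i1_d0: "((\<lambda>x. sp k x * cos x) has_real_derivative
   (- real k) * (sp k x * (tanh x * cos x)) + (-1) * (sp k x * sin x)) (at x)"
  by (auto intro!: derivative_eq_intros sp_deriv_eq tanh_deriv_eq)

lemma i1_d1: "((\<lambda>x. (- real k) * (sp k x * (tanh x * cos x)) + (-1) * (sp k x * sin x)) has_real_derivative
   (real k ^ 2 - 1) * (sp k x * cos x) + (- (real k * (real k + 1))) * (sp (k+2) x * cos x)
    + (2 * real k) * (sp k x * (tanh x * sin x))) (at x)"
  apply (auto intro!: derivative_eq_intros sp_deriv_eq tanh_deriv_eq)
  unfolding sp_Suc2 power2_eq_square using tanh_sq'[of x] by algebra

lemma i2_d0: "((\<lambda>x. sp k x * (tanh x * sin x)) has_real_derivative
   (- real k) * (sp k x * sin x) + (real k + 1) * (sp (k+2) x * sin x) + 1 * (sp k x * (tanh x * cos x))) (at x)"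
  apply (auto intro!: derivative_eq_intros sp_deriv_eq tanh_deriv_eq)
  unfolding sp_Suc2 power2_eq_square using tanh_sq'[of x] by algebra

lemma i2_d1: "((\<lambda>x. (- real k) * (sp k x * sin x) + (real k + 1) * (sp (k+2) x * sin x) + 1 * (sp k x * (tanh x * cos x))) has_real_derivative
   (real k ^ 2 - 1) * (sp k x * (tanh x * sin x)) + (- ((real k + 1) * (real k + 2))) * (sp (k+2) x * (tanh x * sin x))
    + (- 2 * real k) * (sp k x * cos x) + (2 * (real k + 1)) * (sp (k+2) x * cos x)) (at x)"
  apply (auto intro!: derivative_eq_intros sp_deriv_eq tanh_deriv_eq)
  unfolding sp_Suc2 power2_eq_square using tanh_sq'[of x] by algebra

lemma pa_d: "((\<lambda>x. sp k x * sin x) has_real_derivative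
   (- real k) * (sp k x * (tanh x * sin x)) + 1 * (sp k x * cos x)) (at x)"
  by (auto intro!: derivative_eq_intros sp_deriv_eq tanh_deriv_eq)

lemma pb_d: "((\<lambda>x. sp k x * (tanh x * cos x)) has_real_derivative
   (- real k) * (sp k x * cos x) + (real k + 1) * (sp (k+2) x * cos x) + (-1) * (sp k x * (tanh x * sin x))) (at x)"
  apply (auto intro!: derivative_eq_intros sp_deriv_eq tanh_deriv_eq)
  unfolding sp_Suc2 power2_eq_square using tanh_sq'[of x] by algebra

lemma abs_tanh_le: "\<bar>tanh (x::real)\<bar> \<le> 1"
  using tanh_real_lt_1[of x] tanh_real_gt_neg1[of x] by simp

lemma u_cos: "\<bar>cos (x::real)\<bar> \<le> 1" by simp
lemma u_sin: "\<bar>sin (x::real)\<bar> \<le> 1" by simp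
lemma u_tcos: "\<bar>tanh x * cos (x::real)\<bar> \<le> 1"
  by (simp add: abs_mult mult_le_one abs_tanh_le)
lemma u_tsin: "\<bar>tanh x * sin (x::real)\<bar> \<le> 1"
  by (simp add: abs_mult mult_le_one abs_tanh_le)

lemma mb: assumes "1 \<le> k" "\<bar>u\<bar> \<le> 1" shows "\<bar>sp k x * u\<bar> \<le> sech x"
proof -
  obtain m where k: "k = Suc m" using assms(1) by (cases k) auto
  have "\<bar>sp k x\<bar> = sech x * sech x ^ m" unfolding sp_def k using sech_pos[of x] by simp
  also have "\<dots> \<le> sech x * 1"
    using sech_pos[of x] sech_le1[of x] by (intro mult_left_mono power_le_one) auto
  finally have "\<bar>sp k x\<bar> \<le> sech x" by simp
  then show ?thesis unfolding abs_mult using assms(2)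
    by (metis abs_ge_zero mult_le_one mult.comm_neutral mult_right_mono order_trans mult.commute)
qed

lemma mb2: "1 \<le> k \<Longrightarrow> \<bar>u\<bar> \<le> 1 \<Longrightarrow> \<bar>sp (k+2) x * u\<bar> \<le> sech x"
  by (rule mb) auto

lemma comb1: "\<bar>m1\<bar> \<le> S \<Longrightarrow> \<bar>a * m1\<bar> \<le> \<bar>a\<bar> * (S::real)"
  by (simp add: abs_mult mult_left_mono)

lemma comb2: assumes h1: "\<bar>m1\<bar> \<le> S" and h2: "\<bar>m2\<bar> \<le> S"
  shows "\<bar>a * m1 + b * m2\<bar> \<le> (\<bar>a\<bar> + \<bar>b\<bar>) * (S::real)"
proof -
  have "\<bar>a * m1 + b * m2\<bar> \<le> \<bar>a * m1\<bar> + \<bar>b * m2\<bar>" by (rule abs_triangle_ineq)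
  also have "\<dots> \<le> \<bar>a\<bar> * S + \<bar>b\<bar> * S" by (rule add_mono[OF comb1[OF h1] comb1[OF h2]])
  finally show ?thesis by (simp only: distrib_right)
qed
lemma comb3: assumes h1: "\<bar>m1\<bar> \<le> S" and h2: "\<bar>m2\<bar> \<le> S" and h3: "\<bar>m3\<bar> \<le> S"
  shows "\<bar>a * m1 + b * m2 + c * m3\<bar> \<le> (\<bar>a\<bar> + \<bar>b\<bar> + \<bar>c\<bar>) * (S::real)"
proof -
  have "\<bar>a * m1 + b * m2 + c * m3\<bar> \<le> \<bar>a * m1 + b * m2\<bar> + \<bar>c * m3\<bar>" by (rule abs_triangle_ineq)
  also have "\<dots> \<le> (\<bar>a\<bar> + \<bar>b\<bar>) * S + \<bar>c\<bar> * S" by (rule add_mono[OF comb2[OF h1 h2] comb1[OF h3]])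
  finally show ?thesis by (simp only: distrib_right)
qed
lemma comb4: assumes h1: "\<bar>m1\<bar> \<le> S" and h2: "\<bar>m2\<bar> \<le> S" and h3: "\<bar>m3\<bar> \<le> S" and h4: "\<bar>m4\<bar> \<le> S"
  shows "\<bar>a * m1 + b * m2 + c * m3 + d * m4\<bar> \<le> (\<bar>a\<bar> + \<bar>b\<bar> + \<bar>c\<bar> + \<bar>d\<bar>) * (S::real)"
proof -
  have "\<bar>a * m1 + b * m2 + c * m3 + d * m4\<bar> \<le> \<bar>a * m1 + b * m2 + c * m3\<bar> + \<bar>d * m4\<bar>" by (rule abs_triangle_ineq)
  also have "\<dots> \<le> (\<bar>a\<bar> + \<bar>b\<bar> + \<bar>c\<bar>) * S + \<bar>d\<bar> * S" by (rule add_mono[OF comb3[OF h1 h2 h3] comb1[OF h4]])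
  finally show ?thesis by (simp only: distrib_right)
qed
lemma combd: assumes h2: "\<bar>f2\<bar> \<le> A * S" and h0: "\<bar>f0\<bar> \<le> 1 * S"
  shows "\<bar>f2 - 2 * f0\<bar> \<le> (A + 2) * (S::real)"
proof -
  have "\<bar>f2 - 2 * f0\<bar> \<le> \<bar>f2\<bar> + \<bar>2 * f0\<bar>" by (rule abs_triangle_ineq4)
  moreover have "\<bar>2 * f0\<bar> = 2 * \<bar>f0\<bar>" by (simp add: abs_mult)
  moreover have "(A + 2) * S = A * S + 2 * S" by (simp only: distrib_right)
  ultimately show ?thesis using h2 h0 by linarith
qed

lemma sech_eq_inv: "sech = (\<lambda>x. inverse (cosh x))"
  unfolding sech_def[abs_def] by (simp add: divide_inverse)
lemma sech_top: "(sech \<longlongrightarrow> 0) at_top"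
  unfolding sech_eq_inv by (rule tendsto_inverse_0_at_top[OF cosh_real_at_top])
lemma sech_bot: "(sech \<longlongrightarrow> 0) at_bot"
  unfolding sech_eq_inv by (rule tendsto_inverse_0_at_top[OF cosh_real_at_bot])

lemma lim_bound:
  assumes b: "\<And>x. \<bar>g x\<bar> \<le> C * sech x"
  shows "(g \<longlongrightarrow> 0) at_top" "(g \<longlongrightarrow> 0) at_bot"
proof -
  have ev: "eventually (\<lambda>x. norm (g x) \<le> C * sech x) F" for F
    using b by (simp add: always_eventually)
  show "(g \<longlongrightarrow> 0) at_top"
    by (rule Lim_null_comparison[OF ev tendsto_mult_right_zero[OF sech_top]])
  show "(g \<longlongrightarrow> 0) at_bot"
    by (rule Lim_null_comparison[OF ev tendsto_mult_right_zero[OF sech_bot]])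
qed

lemma FTC0:
  fixes F f :: "real \<Rightarrow> real"
  assumes d: "\<And>x. (F has_real_derivative f x) (at x)" and c: "\<And>x. isCont f x"
    and i: "integrable lborel f" and lt: "(F \<longlongrightarrow> 0) at_top" and lb: "(F \<longlongrightarrow> 0) at_bot"
  shows "(\<integral>x. f x \<partial>lborel) = 0"
proof -
  have "(LBINT x=-\<infinity>..\<infinity>. f x) = 0 - 0"
  proof (rule interval_integral_FTC_integrable)
    show "set_integrable lborel (einterval (-\<infinity>) \<infinity>) f" using i by (simp add: set_integrable_def)
    show "((F \<circ> real_of_ereal) \<longlongrightarrow> 0) (at_right (-\<infinity>))" unfolding ereal_tendsto_simps by (rule lb)
    show "((F \<circ> real_of_ereal) \<longlongrightarrow> 0) (at_left \<infinity>)" unfolding ereal_tendsto_simps by (rule lt)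
  qed (auto simp: has_real_derivative_iff_has_vector_derivative[symmetric] d c)
  then show ?thesis by (simp add: interval_lebesgue_integral_def set_lebesgue_integral_def)
qed

lemma sp_cont: "isCont (sp k) x"
  using sp_deriv_eq[OF refl, of k x] DERIV_isCont by blast

lemma sp_meas[measurable]: "sp k \<in> borel_measurable borel"
  unfolding sp_def[abs_def] by measurable

lemma tanh_meas[measurable]: "(tanh :: real \<Rightarrow> real) \<in> borel_measurable borel"
  by (intro borel_measurable_continuous_onI continuous_at_imp_continuous_on ballI tanh_cont)

lemma int_m:
  assumes k: "1 \<le> k" and [measurable]: "u \<in> borel_measurable borel" and u: "\<And>x. \<bar>u x\<bar> \<le> 1"
  shows "integrable lborel (\<lambda>x. sp k x * u x)" "integrable lborel (\<lambda>x. sp k x * u x * Tfun x)"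
proof -
  have b: "\<bar>sp k x * u x\<bar> \<le> 1 * sech x" for x using mb[OF k u] by simp
  show "integrable lborel (\<lambda>x. sp k x * u x)" by (rule integrable_sech_bound[OF _ b]) simp
  show "integrable lborel (\<lambda>x. sp k x * u x * Tfun x)" by (rule integrable_T_bound[OF _ b]) simp
qed

lemma lin3:
  fixes f g h :: "real \<Rightarrow> real"
  assumes "integrable lborel f" "integrable lborel g" "integrable lborel h"
  shows "(\<integral>x. a * f x + b * g x + c * h x \<partial>lborel) = a * (\<integral>x. f x \<partial>lborel) + b * (\<integral>x. g x \<partial>lborel) + c * (\<integral>x. h x \<partial>lborel)"
  using assms by simp

lemma lin4:
  fixes f g h l :: "real \<Rightarrow> real"
  assumes "integrable lborel f" "integrable lborel g" "integrable lborel h" "integrable lborel l"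
  shows "(\<integral>x. a * f x + b * g x + c * h x + d * l x \<partial>lborel) = a * (\<integral>x. f x \<partial>lborel) + b * (\<integral>x. g x \<partial>lborel) + c * (\<integral>x. h x \<partial>lborel) + d * (\<integral>x. l x \<partial>lborel)"
  using assms by simp

definition "RR k = (\<integral>x. sp k x * cos x * Tfun x \<partial>lborel)"
definition "SS k = (\<integral>x. sp k x * (tanh x * sin x) * Tfun x \<partial>lborel)"
definition "PP k = (\<integral>x. sp k x * cos x \<partial>lborel)"
definition "QQ k = (\<integral>x. sp k x * (tanh x * sin x) \<partial>lborel)"

lemma r_RR: "r_int k = RR k" unfolding r_int_def RR_def sp_def by (simp add: mult_ac)
lemma s_SS: "s_int k = SS k" unfolding s_int_def SS_def sp_def by (simp add: mult_ac)
lemma p_PP: "p_int k = PP k" unfolding p_int_def PP_def sp_def by (simp add: mult_ac)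

lemma ident1:
  assumes k: "1 \<le> k"
  shows "(real k ^ 2 - 3) * RR k + (- (real k * (real k + 1))) * RR (k+2) + (2 * real k) * SS k
     = - 2 * sqrt 2 * PP (k+2)"
proof -
  define f0 where "f0 x = sp k x * cos x" for x
  define f1 where "f1 x = (- real k) * (sp k x * (tanh x * cos x)) + (-1) * (sp k x * sin x)" for x
  define f2 where "f2 x = (real k ^ 2 - 1) * (sp k x * cos x) + (- (real k * (real k + 1))) * (sp (k+2) x * cos x)
    + (2 * real k) * (sp k x * (tanh x * sin x))" for x
  have k2: "1 \<le> k + 2" by simp
  have b0: "\<bar>f0 x\<bar> \<le> 1 * sech x" for x unfolding f0_def using mb[OF k u_cos] by simp
  have b1: "\<bar>f1 x\<bar> \<le> (\<bar>- real k\<bar> + \<bar>-1\<bar>) * sech x" for x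
    unfolding f1_def by (rule comb2[OF mb[OF k u_tcos] mb[OF k u_sin]])
  have b2: "\<bar>f2 x\<bar> \<le> (\<bar>real k ^ 2 - 1\<bar> + \<bar>- (real k * (real k + 1))\<bar> + \<bar>2 * real k\<bar>) * sech x" for x
    unfolding f2_def by (rule comb3[OF mb[OF k u_cos] mb[OF k2 u_cos] mb[OF k u_tsin]])
  have b: "\<bar>f2 x - 2 * f0 x\<bar> \<le> ((\<bar>real k ^ 2 - 1\<bar> + \<bar>- (real k * (real k + 1))\<bar> + \<bar>2 * real k\<bar>) + 2) * sech x" for x
    by (rule combd[OF b2 b0])
  have d0: "(f0 has_real_derivative f1 x) (at x)" for x
    unfolding f0_def[abs_def] f1_def using i1_d0 .
  have d1: "(f1 has_real_derivative f2 x) (at x)" for x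
    unfolding f1_def[abs_def] f2_def using i1_d1 .
  have c2: "isCont f2 x" for x unfolding f2_def[abs_def]
    by (intro continuous_intros sp_cont tanh_cont)
  have main: "(\<integral>x. (f2 x - 2 * f0 x) * Tfun x \<partial>lborel) = - 2 * sqrt 2 * (\<integral>y. sech y ^ 2 * f0 y \<partial>lborel)"
    by (rule main_id[OF d0 d1 c2 lim_bound[OF b0] lim_bound[OF b1] b])
  have "(\<integral>x. (f2 x - 2 * f0 x) * Tfun x \<partial>lborel) = (\<integral>x. (real k ^ 2 - 3) * (sp k x * cos x * Tfun x)
     + (- (real k * (real k + 1))) * (sp (k+2) x * cos x * Tfun x) + (2 * real k) * (sp k x * (tanh x * sin x) * Tfun x) \<partial>lborel)"
    unfolding f0_def f2_def by (intro Bochner_Integration.integral_cong refl) algebra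
  also have "\<dots> = (real k ^ 2 - 3) * RR k + (- (real k * (real k + 1))) * RR (k+2) + (2 * real k) * SS k"
    unfolding RR_def SS_def
    by (rule lin3[OF int_m(2)[OF k _ u_cos] int_m(2)[OF k2 _ u_cos] int_m(2)[OF k _ u_tsin]]) measurable
  finally have L: "(\<integral>x. (f2 x - 2 * f0 x) * Tfun x \<partial>lborel) = \<dots>" .
  have "(\<integral>y. sech y ^ 2 * f0 y \<partial>lborel) = PP (k+2)"
    unfolding PP_def f0_def sp_def by (rule Bochner_Integration.integral_cong) (auto simp: power_add power2_eq_square mult_ac)
  then show ?thesis using main L by simp
qed

lemma ident2:
  assumes k: "1 \<le> k"
  shows "(real k ^ 2 - 3) * SS k + (- ((real k + 1) * (real k + 2))) * SS (k+2) + (- 2 * real k) * RR k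
     + (2 * (real k + 1)) * RR (k+2) = - 2 * sqrt 2 * QQ (k+2)"
proof -
  define f0 where "f0 x = sp k x * (tanh x * sin x)" for x
  define f1 where "f1 x = (- real k) * (sp k x * sin x) + (real k + 1) * (sp (k+2) x * sin x) + 1 * (sp k x * (tanh x * cos x))" for x
  define f2 where "f2 x = (real k ^ 2 - 1) * (sp k x * (tanh x * sin x)) + (- ((real k + 1) * (real k + 2))) * (sp (k+2) x * (tanh x * sin x))
    + (- 2 * real k) * (sp k x * cos x) + (2 * (real k + 1)) * (sp (k+2) x * cos x)" for x
  have k2: "1 \<le> k + 2" by simp
  have b0: "\<bar>f0 x\<bar> \<le> 1 * sech x" for x unfolding f0_def using mb[OF k u_tsin] by simp
  have b1: "\<bar>f1 x\<bar> \<le> (\<bar>- real k\<bar> + \<bar>real k + 1\<bar> + \<bar>1\<bar>) * sech x" for x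
    unfolding f1_def by (rule comb3[OF mb[OF k u_sin] mb[OF k2 u_sin] mb[OF k u_tcos]])
  have b2: "\<bar>f2 x\<bar> \<le> (\<bar>real k ^ 2 - 1\<bar> + \<bar>- ((real k + 1) * (real k + 2))\<bar> + \<bar>- 2 * real k\<bar> + \<bar>2 * (real k + 1)\<bar>) * sech x" for x
    unfolding f2_def by (rule comb4[OF mb[OF k u_tsin] mb[OF k2 u_tsin] mb[OF k u_cos] mb[OF k2 u_cos]])
  have b: "\<bar>f2 x - 2 * f0 x\<bar> \<le> ((\<bar>real k ^ 2 - 1\<bar> + \<bar>- ((real k + 1) * (real k + 2))\<bar> + \<bar>- 2 * real k\<bar> + \<bar>2 * (real k + 1)\<bar>) + 2) * sech x" for x
    by (rule combd[OF b2 b0])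
  have d0: "(f0 has_real_derivative f1 x) (at x)" for x
    unfolding f0_def[abs_def] f1_def using i2_d0 .
  have d1: "(f1 has_real_derivative f2 x) (at x)" for x
    unfolding f1_def[abs_def] f2_def using i2_d1 .
  have c2: "isCont f2 x" for x unfolding f2_def[abs_def]
    by (intro continuous_intros sp_cont tanh_cont)
  have main: "(\<integral>x. (f2 x - 2 * f0 x) * Tfun x \<partial>lborel) = - 2 * sqrt 2 * (\<integral>y. sech y ^ 2 * f0 y \<partial>lborel)"
    by (rule main_id[OF d0 d1 c2 lim_bound[OF b0] lim_bound[OF b1] b])
  have "(\<integral>x. (f2 x - 2 * f0 x) * Tfun x \<partial>lborel) = (\<integral>x. (real k ^ 2 - 3) * (sp k x * (tanh x * sin x) * Tfun x)
     + (- ((real k + 1) * (real k + 2))) * (sp (k+2) x * (tanh x * sin x) * Tfun x) + (- 2 * real k) * (sp k x * cos x * Tfun x)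
     + (2 * (real k + 1)) * (sp (k+2) x * cos x * Tfun x) \<partial>lborel)"
    unfolding f0_def f2_def by (intro Bochner_Integration.integral_cong refl) algebra
  also have "\<dots> = (real k ^ 2 - 3) * SS k + (- ((real k + 1) * (real k + 2))) * SS (k+2) + (- 2 * real k) * RR k
     + (2 * (real k + 1)) * RR (k+2)"
    unfolding RR_def SS_def
    by (rule lin4[OF int_m(2)[OF k _ u_tsin] int_m(2)[OF k2 _ u_tsin] int_m(2)[OF k _ u_cos] int_m(2)[OF k2 _ u_cos]]) measurable
  finally have L: "(\<integral>x. (f2 x - 2 * f0 x) * Tfun x \<partial>lborel) = \<dots>" .
  have "(\<integral>y. sech y ^ 2 * f0 y \<partial>lborel) = QQ (k+2)"
    unfolding QQ_def f0_def sp_def by (rule Bochner_Integration.integral_cong) (auto simp: power_add power2_eq_square mult_ac)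
  then show ?thesis using main L by simp
qed

lemma lin2:
  fixes f g :: "real \<Rightarrow> real"
  assumes "integrable lborel f" "integrable lborel g"
  shows "(\<integral>x. a * f x + b * g x \<partial>lborel) = a * (\<integral>x. f x \<partial>lborel) + b * (\<integral>x. g x \<partial>lborel)"
  using assms by simp

lemma pa:
  assumes k: "1 \<le> k"
  shows "(- real k) * QQ k + 1 * PP k = 0"
proof -
  define f where "f x = (- real k) * (sp k x * (tanh x * sin x)) + 1 * (sp k x * cos x)" for x
  have bF: "\<bar>sp k x * sin x\<bar> \<le> 1 * sech x" for x using mb[OF k u_sin] by simp
  have bf: "\<bar>f x\<bar> \<le> (\<bar>- real k\<bar> + \<bar>1\<bar>) * sech x" for x
    unfolding f_def by (rule comb2[OF mb[OF k u_tsin] mb[OF k u_cos]])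
  have "(\<integral>x. f x \<partial>lborel) = 0"
  proof (rule FTC0[where F="\<lambda>x. sp k x * sin x"])
    show "((\<lambda>x. sp k x * sin x) has_real_derivative f x) (at x)" for x unfolding f_def by (rule pa_d)
    show "isCont f x" for x unfolding f_def[abs_def] by (intro continuous_intros sp_cont tanh_cont)
    show "integrable lborel f" by (rule integrable_sech_bound[OF _ bf]) (simp add: f_def[abs_def])
  qed (use lim_bound[OF bF] in auto)
  moreover have "(\<integral>x. f x \<partial>lborel) = (- real k) * QQ k + 1 * PP k"
    unfolding f_def[abs_def] QQ_def PP_def
    by (rule lin2[OF int_m(1)[OF k _ u_tsin] int_m(1)[OF k _ u_cos]]) measurable
  ultimately show ?thesis by simp
qed

lemma pb:
  assumes k: "1 \<le> k"
  shows "(- real k) * PP k + (real k + 1) * PP (k+2) + (-1) * QQ k = 0"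
proof -
  have k2: "1 \<le> k + 2" by simp
  define f where "f x = (- real k) * (sp k x * cos x) + (real k + 1) * (sp (k+2) x * cos x) + (-1) * (sp k x * (tanh x * sin x))" for x
  have bF: "\<bar>sp k x * (tanh x * cos x)\<bar> \<le> 1 * sech x" for x using mb[OF k u_tcos] by simp
  have bf: "\<bar>f x\<bar> \<le> (\<bar>- real k\<bar> + \<bar>real k + 1\<bar> + \<bar>-1\<bar>) * sech x" for x
    unfolding f_def by (rule comb3[OF mb[OF k u_cos] mb[OF k2 u_cos] mb[OF k u_tsin]])
  have "(\<integral>x. f x \<partial>lborel) = 0"
  proof (rule FTC0[where F="\<lambda>x. sp k x * (tanh x * cos x)"])
    show "((\<lambda>x. sp k x * (tanh x * cos x)) has_real_derivative f x) (at x)" for x unfolding f_def by (rule pb_d)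
    show "isCont f x" for x unfolding f_def[abs_def] by (intro continuous_intros sp_cont tanh_cont)
    show "integrable lborel f" by (rule integrable_sech_bound[OF _ bf]) (simp add: f_def[abs_def])
  qed (use lim_bound[OF bF] in auto)
  moreover have "(\<integral>x. f x \<partial>lborel) = (- real k) * PP k + (real k + 1) * PP (k+2) + (-1) * QQ k"
    unfolding f_def[abs_def] QQ_def PP_def
    by (rule lin3[OF int_m(1)[OF k _ u_cos] int_m(1)[OF k2 _ u_cos] int_m(1)[OF k _ u_tsin]]) measurable
  ultimately show ?thesis by simp
qed

theorem lemma3p3:
  shows "r_int 3 = - r_int 1 + s_int 1 + sqrt 2 * p_int 1 \<and>
    s_int 3 = 1/3 * s_int 1 - r_int 1 + 7/9 * sqrt 2 * p_int 1 \<and>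
    r_int 5 = - r_int 1 + 2/3 * s_int 1 + 37/36 * sqrt 2 * p_int 1 \<and>
    s_int 5 = - 2/5 * r_int 1 + 1/15 * s_int 1 + 13/36 * sqrt 2 * p_int 1 \<and>
    r_int 7 = - 13/15 * r_int 1 + 23/45 * s_int 1 + 83 * sqrt 2 / 90 * p_int 1"
proof -
  have a1: "(- 1) * QQ 1 + 1 * PP 1 = 0" using pa[of 1] by (simp add: eval_nat_numeral)
  have a3: "(- 3) * QQ 3 + 1 * PP 3 = 0" using pa[of 3] by (simp add: eval_nat_numeral)
  have a5: "(- 5) * QQ 5 + 1 * PP 5 = 0" using pa[of 5] by (simp add: eval_nat_numeral)
  have b1: "(- 1) * PP 1 + 2 * PP 3 + (-1) * QQ 1 = 0" using pb[of 1] by (simp add: eval_nat_numeral)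
  have b3: "(- 3) * PP 3 + 4 * PP 5 + (-1) * QQ 3 = 0" using pb[of 3] by (simp add: eval_nat_numeral)
  have b5: "(- 5) * PP 5 + 6 * PP 7 + (-1) * QQ 5 = 0" using pb[of 5] by (simp add: eval_nat_numeral)
  have p3: "PP 3 = PP 1" using a1 b1 by linarith
  have q3: "QQ 3 = 1/3 * PP 1" using a3 p3 by linarith
  have p5: "PP 5 = 5/6 * PP 1" using b3 p3 q3 by linarith
  have q5: "QQ 5 = 1/6 * PP 1" using a5 p5 by linarith
  have p7: "PP 7 = 13/18 * PP 1" using b5 p5 q5 by linarith
  define X where "X = sqrt 2 * PP 1"
  have e1: "(1 - 3) * RR 1 + (- 2) * RR 3 + 2 * SS 1 = - 2 * X"
    using ident1[of 1] p3 unfolding X_def by (simp add: eval_nat_numeral)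
  have e3: "6 * RR 3 + (- 12) * RR 5 + 6 * SS 3 = - 2 * (5/6) * X"
    using ident1[of 3] p5 unfolding X_def by (simp add: eval_nat_numeral)
  have e5: "22 * RR 5 + (- 30) * RR 7 + 10 * SS 5 = - 2 * (13/18) * X"
    using ident1[of 5] p7 unfolding X_def by (simp add: eval_nat_numeral)
  have f1: "(- 2) * SS 1 + (- 6) * SS 3 + (- 2) * RR 1 + 4 * RR 3 = - 2 * (1/3) * X"
    using ident2[of 1] q3 unfolding X_def by (simp add: eval_nat_numeral)
  have f3: "6 * SS 3 + (- 20) * SS 5 + (- 6) * RR 3 + 8 * RR 5 = - 2 * (1/6) * X"
    using ident2[of 3] q5 unfolding X_def by (simp add: eval_nat_numeral)
  have X: "sqrt 2 * p_int 1 = X" unfolding X_def p_PP ..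
  show ?thesis unfolding r_RR s_SS
    using e1 e3 e5 f1 f3 X by (simp add: mult.assoc)
qed

end
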